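(* For every prime $p$ there exists a cyclic skew-symmetric linear $(2,p,p)$-AONT: that is, there exist $\tau\in\mathbb{F}_p$ and a $p\times p$ matrix $M$ over $\mathbb{F}_p$ such that $M$ is invertible, every $2\times2$ submatrix of $M$ is invertible, $M$ is in type $p$ standard form, $M$ is $\tau$-skew-symmetric, and $M$ is cyclic.
   Context: A linear $(t,s,q)$-AONT is given by an invertible $s\times s$ matrix $M$ over $\mathbb{F}_q$ (transform $(y_1,\dots,y_s)=(x_1,\dots,x_s)M^{-1}$); $M$ defines one iff every $t\times t$ submatrix is invertible. A $q\times q$ matrix $M$ (rows/columns indexed $1,\dots,q$) is in type $q$ standard form if all its diagonal entries are $0$ and all off-diagonal entries of the first row and first column are $1$. Such an $M$ is $\tau$-skew-symmetric if $M(i,j)+M(j,i)=\tau$ for all $2\le i,j\le q$ with $i\ne j$, and it is cyclic if its lower right $(q-1)\times(q-1)$ submatrix is a circulant matrix (each row is the cyclic shift by one position to the right of the previous row). "Skew-symmetric" means $\tau$-skew-symmetric for some $\tau$. *)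

theory Defs
  imports "Jordan_Normal_Form.Matrix" "Jordan_Normal_Form.DL_Submatrix"
begin

(* Matrices are Jordan_Normal_Form matrices, indexed 0..q-1 (paper: 1..q).
   Paper index i corresponds to index i-1 here. *)

definition AONT_matrix :: "nat \<Rightarrow> nat \<Rightarrow> 'a::field mat \<Rightarrow> bool" where
  "AONT_matrix t s M \<longleftrightarrow> M \<in> carrier_mat s s \<and> invertible_mat M \<and>
     (\<forall>I J. I \<subseteq> {..<s} \<longrightarrow> J \<subseteq> {..<s} \<longrightarrow> card I = t \<longrightarrow> card J = t
        \<longrightarrow> invertible_mat (submatrix M I J))"

definition standard_form :: "nat \<Rightarrow> 'a::field mat \<Rightarrow> bool" where
  "standard_form q M \<longleftrightarrow> M \<in> carrier_mat q q \<and>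
     (\<forall>i<q. M $$ (i, i) = 0) \<and>
     (\<forall>j<q. j \<noteq> 0 \<longrightarrow> M $$ (0, j) = 1 \<and> M $$ (j, 0) = 1)"

definition tau_skew_symmetric :: "nat \<Rightarrow> 'a::field \<Rightarrow> 'a mat \<Rightarrow> bool" where
  "tau_skew_symmetric q \<tau> M \<longleftrightarrow>
     (\<forall>i j. 1 \<le> i \<longrightarrow> i < q \<longrightarrow> 1 \<le> j \<longrightarrow> j < q \<longrightarrow> i \<noteq> j
        \<longrightarrow> M $$ (i, j) + M $$ (j, i) = \<tau>)"

(* lower right (q-1)x(q-1) submatrix C(k,l) = M(k+1,l+1) is circulant:
   row k+1 is row k cyclically shifted one position to the right *)
definition cyclic_mat :: "nat \<Rightarrow> 'a mat \<Rightarrow> bool" where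
  "cyclic_mat q M \<longleftrightarrow>
     (\<forall>k l. k + 1 < q - 1 \<longrightarrow> l < q - 1 \<longrightarrow>
        M $$ (k + 2, (l + 1) mod (q - 1) + 1) = M $$ (k + 1, l + 1))"

end

theory Submission imports Defs "Jordan_Normal_Form.Determinant" "HOL-Number_Theory.Number_Theory" begin

definition Mf :: "'a::field \<Rightarrow> 'a \<Rightarrow> 'a" where
  "Mf x y = (if x = y then 0 else if x = 0 \<or> y = 0 then 1 else x / (y - x))"

lemma Mf_nz: "x \<noteq> y \<Longrightarrow> Mf x y \<noteq> 0"
  by (auto simp: Mf_def)
lemma Mf_0l: "y \<noteq> 0 \<Longrightarrow> Mf 0 y = 1" by (simp add: Mf_def)
lemma Mf_0r: "x \<noteq> 0 \<Longrightarrow> Mf x 0 = 1" by (simp add: Mf_def)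
lemma Mf_gen: "x \<noteq> y \<Longrightarrow> x \<noteq> 0 \<Longrightarrow> y \<noteq> 0 \<Longrightarrow> Mf x y = x / (y - x)" by (simp add: Mf_def)
lemma Mf_diag: "Mf x x = 0" by (simp add: Mf_def)

lemma div_cancel_eq: fixes x u v :: "'a::field"
  assumes "x \<noteq> 0" "u \<noteq> 0" "v \<noteq> 0" "x / u = x / v" shows "u = v"
proof -
  have "x * v = x * u" using assms by (simp add: divide_eq_eq eq_divide_eq)
  then show ?thesis using assms(1) by simp
qed

lemma frac_lin: fixes y a b :: "'a::field"
  assumes "y \<noteq> 0" "y - a \<noteq> 0" "y - b \<noteq> 0" "a / (y - a) = b / (y - b)" shows "a = b"
proof -
  have "a * (y - b) = b * (y - a)" using assms by (simp add: divide_eq_eq eq_divide_eq)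
  then have "y * (a - b) = 0" by (simp add: algebra_simps)
  then show ?thesis using assms by simp
qed

lemma Mf_minor:
  fixes x1 x2 y1 y2 :: "'a::field"
  assumes "x1 \<noteq> x2" "y1 \<noteq> y2"
  shows "Mf x1 y1 * Mf x2 y2 \<noteq> Mf x1 y2 * Mf x2 y1"
proof (cases "x1 = y1 \<or> x2 = y2 \<or> x1 = y2 \<or> x2 = y1")
  case True
  show ?thesis
  proof (cases "x1 = y1 \<or> x2 = y2")
    case c: True
    have A: "Mf x1 y1 * Mf x2 y2 = 0" using c by (auto simp: Mf_def)
    have B: "Mf x1 y2 * Mf x2 y1 \<noteq> 0" using c assms Mf_nz by auto
    show ?thesis unfolding A using B by simp
  next
    case c: False
    have A: "Mf x1 y2 * Mf x2 y1 = 0" using c True by (auto simp: Mf_def)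
    have B: "Mf x1 y1 * Mf x2 y2 \<noteq> 0" using c Mf_nz by auto
    show ?thesis unfolding A using B by simp
  qed
next
  case False
  then have d: "x1 \<noteq> y1" "x2 \<noteq> y2" "x1 \<noteq> y2" "x2 \<noteq> y1" by auto
  have s: "y1 - x1 \<noteq> 0" "y2 - x2 \<noteq> 0" "y2 - x1 \<noteq> 0" "y1 - x2 \<noteq> 0" using d by auto
  show ?thesis
  proof
    assume eq: "Mf x1 y1 * Mf x2 y2 = Mf x1 y2 * Mf x2 y1"
    show False
    proof (cases "x1 = 0 \<or> x2 = 0 \<or> y1 = 0 \<or> y2 = 0")
      case True
      consider "x1 = 0" | "x2 = 0" | "y1 = 0" | "y2 = 0" using True by blast
      then show False
      proof cases
        case 1
        then have nz: "x2 \<noteq> 0" "y1 \<noteq> 0" "y2 \<noteq> 0" using assms d by auto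
        have "x2 / (y2 - x2) = x2 / (y1 - x2)"
          using eq unfolding 1 Mf_0l[OF nz(2)] Mf_0l[OF nz(3)] Mf_gen[OF d(2) nz(1) nz(3)] Mf_gen[OF d(4) nz(1) nz(2)]
          by simp
        then have "y2 - x2 = y1 - x2" using div_cancel_eq s nz by blast
        then show False using assms by simp
      next
        case 2
        then have nz: "x1 \<noteq> 0" "y1 \<noteq> 0" "y2 \<noteq> 0" using assms d by auto
        have "x1 / (y1 - x1) = x1 / (y2 - x1)"
          using eq unfolding 2 Mf_0l[OF nz(2)] Mf_0l[OF nz(3)] Mf_gen[OF d(1) nz(1) nz(2)] Mf_gen[OF d(3) nz(1) nz(3)]
          by simp
        then have "y1 - x1 = y2 - x1" using div_cancel_eq s nz by blast
        then show False using assms by simp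
      next
        case 3
        then have nz: "x1 \<noteq> 0" "x2 \<noteq> 0" "y2 \<noteq> 0" using assms d by auto
        have "x2 / (y2 - x2) = x1 / (y2 - x1)"
          using eq unfolding 3 Mf_0r[OF nz(1)] Mf_0r[OF nz(2)] Mf_gen[OF d(2) nz(2) nz(3)] Mf_gen[OF d(3) nz(1) nz(3)]
          by simp
        then show False using frac_lin[of y2 x2 x1] s nz assms by auto
      next
        case 4
        then have nz: "x1 \<noteq> 0" "x2 \<noteq> 0" "y1 \<noteq> 0" using assms d by auto
        have "x1 / (y1 - x1) = x2 / (y1 - x2)"
          using eq unfolding 4 Mf_0r[OF nz(1)] Mf_0r[OF nz(2)] Mf_gen[OF d(1) nz(1) nz(3)] Mf_gen[OF d(4) nz(2) nz(3)]
          by simp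
        then show False using frac_lin[of y1 x1 x2] s nz assms by auto
      qed
    next
      case False
      then have nz: "x1 \<noteq> 0" "x2 \<noteq> 0" "y1 \<noteq> 0" "y2 \<noteq> 0" by auto
      have "(x1 * x2) / ((y1 - x1) * (y2 - x2)) = (x1 * x2) / ((y2 - x1) * (y1 - x2))"
        using eq unfolding Mf_gen[OF d(1) nz(1) nz(3)] Mf_gen[OF d(2) nz(2) nz(4)]
          Mf_gen[OF d(3) nz(1) nz(4)] Mf_gen[OF d(4) nz(2) nz(3)]
        by (simp add: mult_ac)
      then have "(y1 - x1) * (y2 - x2) = (y2 - x1) * (y1 - x2)"
        using div_cancel_eq[of "x1 * x2"] s nz by simp
      then have "(y2 - y1) * (x1 - x2) = 0" by (simp add: algebra_simps)
      then show False using assms by simp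
    qed
  qed
qed

lemma Mf_scale: fixes c x y :: "'a::field" assumes "c \<noteq> 0" shows "Mf (c * x) (c * y) = Mf x y"
proof -
  have "c * y - c * x = c * (y - x)" by (simp add: algebra_simps)
  then show ?thesis using assms by (simp add: Mf_def)
qed

lemma skew_pair: fixes x y :: "'a::field" assumes "x \<noteq> y" shows "x / (y - x) + y / (x - y) = -1"
proof -
  have n: "y - x \<noteq> 0" using assms by simp
  have "y / (x - y) = - y / (y - x)" by (metis minus_diff_eq divide_minus_right minus_divide_left)
  then have "x / (y - x) + y / (x - y) = (x - y) / (y - x)" by (simp add: diff_divide_distrib)
  also have "\<dots> = -1" using n by (metis minus_diff_eq divide_minus_left divide_self)
  finally show ?thesis .
qed

lemma lin2: fixes a b c d v0 v1 :: "'a::field"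
  assumes "a * v0 + b * v1 = 0" "c * v0 + d * v1 = 0" "a * d \<noteq> b * c"
  shows "v0 = 0 \<and> v1 = 0"
proof -
  have "(a * d - b * c) * v0 = d * (a * v0 + b * v1) - b * (c * v0 + d * v1)" by (simp add: algebra_simps)
  then have 1: "(a * d - b * c) * v0 = 0" using assms by simp
  have "(a * d - b * c) * v1 = a * (c * v0 + d * v1) - c * (a * v0 + b * v1)" by (simp add: algebra_simps)
  then have 2: "(a * d - b * c) * v1 = 0" using assms by simp
  show ?thesis using 1 2 assms(3) by simp
qed

lemma inv_of_ker: fixes A :: "'b::field mat"
  assumes A: "A \<in> carrier_mat n n"
  and K: "\<And>v. v \<in> carrier_vec n \<Longrightarrow> A *\<^sub>v v = 0\<^sub>v n \<Longrightarrow> v = 0\<^sub>v n"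
  shows "invertible_mat A"
proof -
  have "det A \<noteq> 0" using det_0_iff_vec_prod_zero[OF A] K by auto
  from det_non_zero_imp_unit[OF A this, of "()"]
  obtain B where B: "B \<in> carrier_mat n n" "B * A = 1\<^sub>m n" "A * B = 1\<^sub>m n"
    by (auto simp: Units_def ring_mat_def)
  then show ?thesis using A unfolding invertible_mat_def inverts_mat_def by auto
qed

lemma char_gen: assumes "prime p" "card (UNIV :: 'a::{field,finite} set) = p"
  shows "CHAR('a) = p"
proof -
  have "CHAR('a) dvd p" using CHAR_dvd_CARD[where 'a='a] assms by simp
  then have "CHAR('a) = 1 \<or> CHAR('a) = p" using assms prime_nat_iff by blast
  then show ?thesis using CHAR_not_1[where 'a='a] by auto
qed

locale pfield =
  fixes p :: nat and g :: "'a::{field,finite}"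
  assumes prime_p: "prime p" and card_a: "card (UNIV :: 'a set) = p"
  and gpow: "\<And>k. g ^ k = 1 \<longleftrightarrow> (p - 1) dvd k"
begin

lemma p_gt1: "p > 1" using prime_p prime_gt_1_nat by auto

lemma char: "CHAR('a) = p" using char_gen prime_p card_a by blast

lemma of_nat_0_iff: "(of_nat n :: 'a) = 0 \<longleftrightarrow> p dvd n"
  by (simp add: of_nat_eq_0_iff_char_dvd char)

lemma of_nat_p: "(of_nat p :: 'a) = 0" by (simp add: of_nat_0_iff)

lemma of_nat_pm1: "(of_nat (p - 1) :: 'a) = -1"
proof -
  have "(of_nat (p - 1) :: 'a) = of_nat p - 1" using p_gt1 by (simp add: of_nat_diff)
  then show ?thesis using of_nat_p by simp
qed

lemma g_nz: "g \<noteq> 0"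
proof
  assume "g = 0"
  moreover have "g ^ (p - 1) = 1" using gpow by simp
  ultimately show False using p_gt1 by (simp add: zero_power)
qed

lemma g_inj: assumes "i < p - 1" "j < p - 1" "g ^ i = g ^ j" shows "i = j"
proof (rule ccontr)
  assume ne: "i \<noteq> j"
  have *: "\<And>i j. i < j \<Longrightarrow> j < p - 1 \<Longrightarrow> g ^ i = g ^ j \<Longrightarrow> False"
  proof -
    fix i j assume a: "i < j" "j < p - 1" "g ^ i = g ^ j"
    have "g ^ j = g ^ i * g ^ (j - i)" using a(1) by (simp flip: power_add)
    then have "g ^ (j - i) = 1" using a(3) g_nz by simp
    then have "(p - 1) dvd (j - i)" using gpow by simp
    moreover have "0 < j - i" "j - i < p - 1" using a by auto
    ultimately show False using nat_dvd_not_less by blast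
  qed
  show False using ne assms * [of i j] *[of j i] by (cases "i < j") auto
qed

lemma gen: "UNIV - {0} = (\<lambda>k. g ^ k) ` {..<p - 1}"
proof -
  have inj: "inj_on (\<lambda>k. g ^ k) {..<p - 1}" by (rule inj_onI) (auto intro: g_inj)
  have sub: "(\<lambda>k. g ^ k) ` {..<p - 1} \<subseteq> UNIV - {0}" using g_nz by auto
  have "card ((\<lambda>k. g ^ k) ` {..<p - 1}) = p - 1" using card_image[OF inj] by simp
  moreover have "card (UNIV - {0::'a}) = p - 1" using card_a by (simp add: card_Diff_singleton)
  ultimately show ?thesis using card_subset_eq[OF _ sub] by simp
qed

lemma bij_g: "bij_betw (\<lambda>k. g ^ k) {..<p - 1} (UNIV - {0})"
  using gen unfolding bij_betw_def by (auto intro!: inj_onI g_inj)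

lemma fermat: assumes "(x::'a) \<noteq> 0" shows "x ^ (p - 1) = 1"
proof -
  obtain k where "x = g ^ k" using gen assms by blast
  then have "x ^ (p - 1) = (g ^ (p - 1)) ^ k" by (simp flip: power_mult add: mult.commute)
  moreover have "g ^ (p - 1) = 1" using gpow by simp
  ultimately show ?thesis by simp
qed

lemma inv_pow: assumes "p \<ge> 3" shows "inverse (x::'a) = x ^ (p - 2)"
proof (cases "x = 0")
  case True then show ?thesis using assms by simp
next
  case False
  have "p - 1 = Suc (p - 2)" using assms by simp
  then have "x ^ (p - 2) * x = x ^ (p - 1)" by (simp add: power_Suc2)
  then have "x ^ (p - 2) * x = 1" using fermat False by simp
  then show ?thesis by (metis inverse_unique mult.commute)
qed

lemma powsum: assumes "0 < n" "n < 2 * (p - 1)"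
  shows "(\<Sum>x\<in>UNIV. (x::'a) ^ n) = (if n = p - 1 then -1 else 0)"
proof -
  have "(\<Sum>x\<in>UNIV. (x::'a) ^ n) = (\<Sum>x\<in>UNIV - {0}. x ^ n) + 0 ^ n"
    by (subst sum.remove[of UNIV 0]) auto
  also have "\<dots> = (\<Sum>x\<in>UNIV - {0}. x ^ n)" using assms by simp
  also have "\<dots> = (\<Sum>k<p - 1. (g ^ k) ^ n)"
    using sum.reindex_bij_betw[OF bij_g, of "\<lambda>x. x ^ n"] by simp
  also have "\<dots> = (\<Sum>k<p - 1. (g ^ n) ^ k)" by (simp flip: power_mult add: mult.commute)
  finally have S: "(\<Sum>x\<in>UNIV. (x::'a) ^ n) = (\<Sum>k<p - 1. (g ^ n) ^ k)" .
  show ?thesis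
  proof (cases "n = p - 1")
    case True
    then have "g ^ n = 1" using gpow by simp
    then show ?thesis using S True of_nat_pm1 by simp
  next
    case False
    have "\<not> (p - 1) dvd n"
    proof
      assume "(p - 1) dvd n"
      then obtain c where c: "n = (p - 1) * c" by blast
      then have "c \<noteq> 0" using assms by auto
      moreover have "(p - 1) * c < (p - 1) * 2" using c assms by (simp add: mult.commute)
      then have "c < 2" by (meson mult_less_cancel1)
      ultimately have "c = 1" by auto
      then show False using c False by simp
    qed
    then have ne: "g ^ n \<noteq> 1" using gpow by simp
    have "(g ^ n) ^ (p - 1) = 1" by (metis gpow dvd_triv_right power_mult mult.commute)
    then show ?thesis using S False ne by (simp add: sum_gp_strict)
  qed
qed

lemma inner: assumes p3: "p \<ge> 3" and m: "1 \<le> m" "m \<le> p - 1"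
  shows "(\<Sum>x\<in>UNIV. x ^ m * inverse (y - x)) = of_nat m * (y::'a) ^ (m - 1)"
proof -
  have "(\<Sum>x\<in>UNIV. x ^ m * inverse (y - x)) = (\<Sum>t\<in>UNIV. (y - t) ^ m * t ^ (p - 2))"
    by (rule sum.reindex_bij_witness[of _ "\<lambda>t. y - t" "\<lambda>x. y - x"]) (auto simp: inv_pow[OF p3])
  also have "\<dots> = (\<Sum>t\<in>UNIV. \<Sum>k\<le>m. of_nat (m choose k) * (-1) ^ k * y ^ (m - k) * t ^ (k + (p - 2)))"
  proof (rule sum.cong[OF refl])
    fix t :: 'a
    have "(y - t) ^ m = (- t + y) ^ m" by simp
    also have "\<dots> = (\<Sum>k\<le>m. of_nat (m choose k) * (- t) ^ k * y ^ (m - k))" by (rule binomial_ring)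
    finally have "(y - t) ^ m * t ^ (p - 2) = (\<Sum>k\<le>m. of_nat (m choose k) * (- t) ^ k * y ^ (m - k)) * t ^ (p - 2)"
      by simp
    also have "\<dots> = (\<Sum>k\<le>m. of_nat (m choose k) * (- t) ^ k * y ^ (m - k) * t ^ (p - 2))"
      by (rule sum_distrib_right)
    also have "\<dots> = (\<Sum>k\<le>m. of_nat (m choose k) * (-1) ^ k * y ^ (m - k) * t ^ (k + (p - 2)))"
      by (rule sum.cong[OF refl]) (simp add: power_add power_minus[of t] mult_ac)
    finally show "(y - t) ^ m * t ^ (p - 2) = (\<Sum>k\<le>m. of_nat (m choose k) * (-1) ^ k * y ^ (m - k) * t ^ (k + (p - 2)))" .
  qed
  also have "\<dots> = (\<Sum>k\<le>m. of_nat (m choose k) * (-1) ^ k * y ^ (m - k) * (\<Sum>t\<in>UNIV. t ^ (k + (p - 2))))"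
    by (subst sum.swap) (simp add: sum_distrib_left)
  also have "\<dots> = (\<Sum>k\<le>m. if k = 1 then of_nat m * y ^ (m - 1) else 0)"
  proof (rule sum.cong[OF refl])
    fix k assume "k \<in> {..m}"
    then have "0 < k + (p - 2)" "k + (p - 2) < 2 * (p - 1)" using p3 m by auto
    then have "(\<Sum>t\<in>UNIV. (t::'a) ^ (k + (p - 2))) = (if k + (p - 2) = p - 1 then -1 else 0)" by (rule powsum)
    moreover have "(k + (p - 2) = p - 1) \<longleftrightarrow> k = 1" using p3 by auto
    ultimately show "of_nat (m choose k) * (-1) ^ k * y ^ (m - k) * (\<Sum>t\<in>UNIV. t ^ (k + (p - 2)))
       = (if k = 1 then of_nat m * y ^ (m - 1) else 0)" by auto
  qed
  also have "\<dots> = of_nat m * y ^ (m - 1)" using m by simp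
  finally show ?thesis .
qed

lemma core: assumes p3: "p \<ge> 3" and K: "\<And>x. (\<Sum>y\<in>UNIV. w y * inverse (y - x)) = (0::'a)"
  shows "w a = - (\<Sum>y\<in>UNIV. w y * y ^ (p - 1))"
proof -
  define \<mu> where "\<mu> k = (\<Sum>y\<in>UNIV. w y * y ^ k)" for k
  have mom: "\<mu> k = 0" if k: "k < p - 1" for k
  proof -
    have "0 = (\<Sum>x\<in>UNIV. x ^ (k + 1) * (\<Sum>y\<in>UNIV. w y * inverse (y - x)))" using K by simp
    also have "\<dots> = (\<Sum>x\<in>UNIV. \<Sum>y\<in>UNIV. w y * (x ^ (k + 1) * inverse (y - x)))"
      by (simp add: sum_distrib_left mult_ac)
    also have "\<dots> = (\<Sum>y\<in>UNIV. w y * (\<Sum>x\<in>UNIV. x ^ (k + 1) * inverse (y - x)))"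
      by (subst sum.swap) (simp add: sum_distrib_left)
    also have "\<dots> = (\<Sum>y\<in>UNIV. w y * (of_nat (k + 1) * y ^ k))"
      using inner[OF p3, of "k + 1"] k by simp
    also have "\<dots> = of_nat (k + 1) * \<mu> k" by (simp add: \<mu>_def sum_distrib_left mult_ac)
    finally have "of_nat (k + 1) * \<mu> k = 0" by simp
    moreover have "(of_nat (k + 1) :: 'a) \<noteq> 0"
      using of_nat_0_iff[of "k + 1"] k nat_dvd_not_less[of "k + 1" p] by auto
    ultimately show ?thesis by simp
  qed
  have fe: "(y - a) ^ (p - 1) = (if y = a then 0 else 1)" for y
    using fermat[of "y - a"] p3 by (auto simp: zero_power)
  have "(\<Sum>y\<in>UNIV. w y * (y - a) ^ (p - 1)) = (\<Sum>y\<in>UNIV. w y - (if y = a then w y else 0))"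
  proof (rule sum.cong[OF refl])
    fix y show "w y * (y - a) ^ (p - 1) = w y - (if y = a then w y else 0)"
      by (subst fe) simp
  qed
  also have "\<dots> = \<mu> 0 - w a" by (simp add: sum_subtractf \<mu>_def)
  also have "\<mu> 0 = 0" using mom p3 by simp
  finally have L: "(\<Sum>y\<in>UNIV. w y * (y - a) ^ (p - 1)) = - w a" by simp
  have "(\<Sum>y\<in>UNIV. w y * (y - a) ^ (p - 1))
      = (\<Sum>y\<in>UNIV. \<Sum>k\<le>p - 1. of_nat (p - 1 choose k) * (- a) ^ (p - 1 - k) * (w y * y ^ k))"
  proof (rule sum.cong[OF refl])
    fix y
    have "(y - a) ^ (p - 1) = (y + - a) ^ (p - 1)" by simp
    also have "\<dots> = (\<Sum>k\<le>p - 1. of_nat (p - 1 choose k) * y ^ k * (- a) ^ (p - 1 - k))"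
      by (rule binomial_ring)
    finally show "w y * (y - a) ^ (p - 1) = (\<Sum>k\<le>p - 1. of_nat (p - 1 choose k) * (- a) ^ (p - 1 - k) * (w y * y ^ k))"
      by (simp add: sum_distrib_left mult_ac)
  qed
  also have "\<dots> = (\<Sum>k\<le>p - 1. of_nat (p - 1 choose k) * (- a) ^ (p - 1 - k) * \<mu> k)"
    by (subst sum.swap) (simp add: \<mu>_def sum_distrib_left)
  also have "\<dots> = (\<Sum>k\<le>p - 1. if k = p - 1 then \<mu> (p - 1) else 0)"
    by (rule sum.cong[OF refl]) (auto simp: mom)
  also have "\<dots> = \<mu> (p - 1)" by simp
  finally show ?thesis using L by (simp add: \<mu>_def)
qed

lemma sum_inv_zero: assumes p3: "p \<ge> 3" shows "(\<Sum>x\<in>UNIV. inverse (y - x)) = (0::'a)"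
proof -
  have "(\<Sum>x\<in>UNIV. inverse (y - x)) = (\<Sum>t\<in>UNIV. t ^ (p - 2))"
    by (rule sum.reindex_bij_witness[of _ "\<lambda>t. y - t" "\<lambda>x. y - x"]) (auto simp: inv_pow[OF p3])
  also have "\<dots> = 0" using powsum[of "p - 2"] p3 by simp
  finally show ?thesis .
qed

lemma kernel: assumes H: "\<And>x. (\<Sum>y\<in>UNIV. Mf x y * w y) = (0::'a)" shows "w a = 0"
proof (cases "p = 2")
  case True
  have "{0, 1} \<subseteq> (UNIV :: 'a set)" by simp
  moreover have "card {0, 1::'a} = card (UNIV :: 'a set)" using True card_a by simp
  ultimately have U: "(UNIV :: 'a set) = {0, 1}" by (metis card_subset_eq finite)
  have "w 1 = 0" using H[of 0] unfolding U by (simp add: Mf_def)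
  moreover have "w 0 = 0" using H[of 1] unfolding U by (simp add: Mf_def)
  moreover have "a \<in> {0, 1}" using U by (metis UNIV_I)
  ultimately show ?thesis by auto
next
  case False
  then have p3: "p \<ge> 3" using p_gt1 by linarith
  have A: "(\<Sum>y\<in>UNIV. w y) = w 0"
  proof -
    have "(\<Sum>y\<in>UNIV. Mf 0 y * w y) = (\<Sum>y\<in>UNIV. w y - (if y = 0 then w y else 0))"
      by (rule sum.cong[OF refl]) (simp add: Mf_def)
    also have "\<dots> = (\<Sum>y\<in>UNIV. w y) - w 0" by (simp add: sum_subtractf)
    finally show ?thesis using H[of 0] by simp
  qed
  define w' where "w' y = (if y = 0 then - w 0 else w y)" for y
  have rowx: "(\<Sum>y\<in>UNIV. Mf x y * w y) = x * (\<Sum>y\<in>UNIV. w' y * inverse (y - x))" if x: "x \<noteq> 0" for x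
  proof -
    have "(\<Sum>y\<in>UNIV. Mf x y * w y) = Mf x 0 * w 0 + (\<Sum>y\<in>UNIV - {0}. Mf x y * w y)"
      by (subst sum.remove[of UNIV 0]) auto
    also have "\<dots> = w 0 + (\<Sum>y\<in>UNIV - {0}. x * (w y * inverse (y - x)))"
    proof -
      have "Mf x 0 = 1" using x by (simp add: Mf_def)
      moreover have "Mf x y = x * inverse (y - x)" if "y \<noteq> 0" for y
        using x that by (auto simp: Mf_def divide_inverse)
      ultimately show ?thesis by (auto intro!: sum.cong)
    qed
    also have "\<dots> = x * (w' 0 * inverse (0 - x) + (\<Sum>y\<in>UNIV - {0}. w' y * inverse (y - x)))"
      using x by (simp add: w'_def sum_distrib_left distrib_left)
    also have "\<dots> = x * (\<Sum>y\<in>UNIV. w' y * inverse (y - x))"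
      by (subst sum.remove[of UNIV 0 "\<lambda>y. w' y * inverse (y - x)"]) auto
    finally show ?thesis .
  qed
  have Kx: "(\<Sum>y\<in>UNIV. w' y * inverse (y - x)) = 0" if x: "x \<noteq> 0" for x
    using rowx[OF x] H[of x] x by simp
  have sumK: "(\<Sum>x\<in>UNIV. \<Sum>y\<in>UNIV. w' y * inverse (y - x)) = 0"
  proof -
    have "(\<Sum>x\<in>UNIV. \<Sum>y\<in>UNIV. w' y * inverse (y - x)) = (\<Sum>y\<in>UNIV. w' y * (\<Sum>x\<in>UNIV. inverse (y - x)))"
      by (subst sum.swap) (simp add: sum_distrib_left)
    also have "\<dots> = 0" using sum_inv_zero[OF p3] by simp
    finally show ?thesis .
  qed
  have K: "(\<Sum>y\<in>UNIV. w' y * inverse (y - x)) = 0" for x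
  proof (cases "x = 0")
    case True
    have "(\<Sum>x\<in>UNIV. \<Sum>y\<in>UNIV. w' y * inverse (y - x))
       = (\<Sum>y\<in>UNIV. w' y * inverse (y - 0)) + (\<Sum>x\<in>UNIV - {0}. \<Sum>y\<in>UNIV. w' y * inverse (y - x))"
      by (subst sum.remove[of UNIV 0]) auto
    also have "(\<Sum>x\<in>UNIV - {0}. \<Sum>y\<in>UNIV. w' y * inverse (y - x)) = 0"
      using Kx by (intro sum.neutral) auto
    finally show ?thesis using sumK True by simp
  qed (rule Kx)
  define c where "c = - (\<Sum>y\<in>UNIV. w' y * y ^ (p - 1))"
  have const: "w' b = c" for b unfolding c_def by (rule core[OF p3 K])
  have "(\<Sum>y\<in>UNIV. w' y) = of_nat p * c" using const card_a by simp
  then have S0: "(\<Sum>y\<in>UNIV. w' y) = 0" using of_nat_p by simp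
  have "(\<Sum>y\<in>UNIV. w' y) = (\<Sum>y\<in>UNIV. w y - (if y = 0 then 2 * w 0 else 0))"
    by (rule sum.cong[OF refl]) (simp add: w'_def)
  also have "\<dots> = - w 0" using A by (simp add: sum_subtractf)
  finally have w0: "w 0 = 0" using S0 by simp
  then have "c = 0" using const[of 0] by (simp add: w'_def)
  then show ?thesis using const[of a] w0 by (simp add: w'_def split: if_splits)
qed

definition e :: "nat \<Rightarrow> 'a" where "e i = (if i = 0 then 0 else g ^ (i - 1))"

lemma e_nz: "i \<noteq> 0 \<Longrightarrow> e i \<noteq> 0" using g_nz by (simp add: e_def)

lemma e_inj: assumes "i < p" "j < p" "e i = e j" shows "i = j"
proof (cases "i = 0 \<or> j = 0")
  case True
  then show ?thesis using assms e_nz by (metis e_def)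
next
  case False
  then have "g ^ (i - 1) = g ^ (j - 1)" using assms by (simp add: e_def)
  moreover have "i - 1 < p - 1" "j - 1 < p - 1" using assms False by auto
  ultimately have "i - 1 = j - 1" using g_inj by blast
  then show ?thesis using False by arith
qed

lemma bij_e: "bij_betw e {..<p} UNIV"
  unfolding bij_betw_def
proof
  show "inj_on e {..<p}" by (rule inj_onI) (auto intro: e_inj)
  show "e ` {..<p} = UNIV"
  proof -
    have "y \<in> e ` {..<p}" for y
    proof (cases "y = 0")
      case True
      have "e 0 = y" using True by (simp add: e_def)
      moreover have "0 < p" using p_gt1 by simp
      ultimately show ?thesis by blast
    next
      case False
      then obtain k where k: "k < p - 1" "y = g ^ k" using gen by blast
      then have "e (Suc k) = y" by (simp add: e_def)
      moreover have "Suc k < p" using k by simp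
      ultimately show ?thesis by blast
    qed
    then show ?thesis by auto
  qed
qed

definition Mat :: "'a mat" where "Mat = mat p p (\<lambda>(i, j). Mf (e i) (e j))"

lemma Mat_carrier: "Mat \<in> carrier_mat p p" by (simp add: Mat_def)

lemma Mat_index: "i < p \<Longrightarrow> j < p \<Longrightarrow> Mat $$ (i, j) = Mf (e i) (e j)"
  by (simp add: Mat_def)

lemma Mat_invertible: "invertible_mat Mat"
proof (rule inv_of_ker[OF Mat_carrier])
  fix v :: "'a vec" assume v: "v \<in> carrier_vec p" and Mv: "Mat *\<^sub>v v = 0\<^sub>v p"
  define w where "w y = v $ (inv_into {..<p} e y)" for y
  have we: "w (e j) = v $ j" if "j < p" for j
    using that bij_betw_imp_inj_on[OF bij_e] by (simp add: w_def inv_into_f_f)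
  have H: "(\<Sum>y\<in>UNIV. Mf x y * w y) = 0" for x
  proof -
    obtain i where i: "i < p" "x = e i" using bij_e by (metis UNIV_I bij_betw_def imageE lessThan_iff)
    have "0 = (Mat *\<^sub>v v) $ i" using Mv i by simp
    also have "\<dots> = (\<Sum>j\<in>{0..<p}. Mat $$ (i, j) * v $ j)"
      using i v by (simp add: Mat_def scalar_prod_def)
    also have "\<dots> = (\<Sum>j<p. Mf x (e j) * w (e j))"
      using i by (simp add: Mat_index we atLeast0LessThan)
    also have "\<dots> = (\<Sum>y\<in>UNIV. Mf x y * w y)"
      by (rule sum.reindex_bij_betw[OF bij_e])
    finally show ?thesis by simp
  qed
  have "w y = 0" for y using kernel[OF H] .
  then show "v = 0\<^sub>v p" using v we by (intro eq_vecI) auto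
qed

lemma Mat_sub2:
  assumes I: "I \<subseteq> {..<p}" "card I = 2" and J: "J \<subseteq> {..<p}" "card J = 2"
  shows "invertible_mat (submatrix Mat I J)"
proof -
  have rI: "{i. i < dim_row Mat \<and> i \<in> I} = I" using I Mat_carrier by auto
  have rJ: "{j. j < dim_col Mat \<and> j \<in> J} = J" using J Mat_carrier by auto
  let ?S = "submatrix Mat I J"
  have Sc: "?S \<in> carrier_mat 2 2" using dim_submatrix[of Mat I J] rI rJ I J by auto
  have pI: "pick I a \<in> I" if "a < 2" for a using pick_in_set_le[of a I] that I by simp
  have pJ: "pick J a \<in> J" if "a < 2" for a using pick_in_set_le[of a J] that J by simp
  have Sidx: "?S $$ (a, b) = Mf (e (pick I a)) (e (pick J b))" if "a < 2" "b < 2" for a b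
  proof -
    have lt: "pick I a < p" "pick J b < p" using pI[OF that(1)] pJ[OF that(2)] I J by auto
    have "?S $$ (a, b) = Mat $$ (pick I a, pick J b)"
      using submatrix_index[of a Mat I b J] rI rJ I J that by simp
    then show ?thesis using Mat_index[OF lt] by simp
  qed
  have xI: "e (pick I 0) \<noteq> e (pick I 1)"
  proof
    assume "e (pick I 0) = e (pick I 1)"
    then have "pick I 0 = pick I 1" using e_inj pI[of 0] pI[of 1] I by auto
    moreover have "pick I 0 < pick I 1" using pick_mono_le[of 1 I 0] I by simp
    ultimately show False by simp
  qed
  have yJ: "e (pick J 0) \<noteq> e (pick J 1)"
  proof
    assume "e (pick J 0) = e (pick J 1)"
    then have "pick J 0 = pick J 1" using e_inj pJ[of 0] pJ[of 1] J by auto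
    moreover have "pick J 0 < pick J 1" using pick_mono_le[of 1 J 0] J by simp
    ultimately show False by simp
  qed
  show ?thesis
  proof (rule inv_of_ker[OF Sc])
    fix v :: "'a vec" assume v: "v \<in> carrier_vec 2" and Sv: "?S *\<^sub>v v = 0\<^sub>v 2"
    have row: "(?S *\<^sub>v v) $ a = ?S $$ (a, 0) * v $ 0 + ?S $$ (a, 1) * v $ 1" if "a < 2" for a
      using that v Sc by (simp add: scalar_prod_def numeral_2_eq_2)
    have e0: "?S $$ (0, 0) * v $ 0 + ?S $$ (0, 1) * v $ 1 = 0" using row[of 0] Sv by simp
    have e1: "?S $$ (1, 0) * v $ 0 + ?S $$ (1, 1) * v $ 1 = 0" using row[of 1] Sv by simp
    have det: "?S $$ (0, 0) * ?S $$ (1, 1) \<noteq> ?S $$ (0, 1) * ?S $$ (1, 0)"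
      using Mf_minor[OF xI yJ] by (simp add: Sidx)
    have "v $ 0 = 0 \<and> v $ 1 = 0" by (rule lin2[OF e0 e1 det])
    then show "v = 0\<^sub>v 2" using v by (intro eq_vecI) (auto simp: less_2_cases_iff)
  qed
qed

lemma Mat_AONT: "AONT_matrix 2 p Mat"
  unfolding AONT_matrix_def using Mat_carrier Mat_invertible Mat_sub2 by blast

lemma Mat_std: "standard_form p Mat"
  unfolding standard_form_def
  using Mat_carrier by (auto simp: Mat_index Mf_diag Mf_0l Mf_0r e_nz e_def[of 0])

lemma Mat_skew: "tau_skew_symmetric p (-1) Mat"
  unfolding tau_skew_symmetric_def
proof (intro allI impI)
  fix i j :: nat assume a: "1 \<le> i" "i < p" "1 \<le> j" "j < p" "i \<noteq> j"
  have ne: "e i \<noteq> e j" using e_inj a by blast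
  have nz: "e i \<noteq> 0" "e j \<noteq> 0" using a e_nz by auto
  show "Mat $$ (i, j) + Mat $$ (j, i) = -1"
    using a ne nz Mf_gen[OF ne nz] Mf_gen[OF ne[symmetric] nz(2) nz(1)] skew_pair[OF ne]
    by (simp add: Mat_index)
qed

lemma g_pow_mod: "g ^ (n mod (p - 1)) = g ^ n"
proof -
  have "g ^ n = g ^ ((p - 1) * (n div (p - 1)) + n mod (p - 1))" by simp
  also have "\<dots> = (g ^ (p - 1)) ^ (n div (p - 1)) * g ^ (n mod (p - 1))"
    by (simp only: power_add power_mult)
  also have "g ^ (p - 1) = 1" using gpow by simp
  finally show ?thesis by simp
qed

lemma Mat_cyclic: "cyclic_mat p Mat"
  unfolding cyclic_mat_def
proof (intro allI impI)
  fix k l assume a: "k + 1 < p - 1" "l < p - 1"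
  have m: "(l + 1) mod (p - 1) < p - 1" using a by simp
  have i1: "k + 2 < p" using a by simp
  have i2: "(l + 1) mod (p - 1) + 1 < p" using m by simp
  have "Mat $$ (k + 2, (l + 1) mod (p - 1) + 1) = Mf (e (k + 2)) (e ((l + 1) mod (p - 1) + 1))"
    by (rule Mat_index[OF i1 i2])
  also have "e (k + 2) = g * g ^ k" by (simp add: e_def)
  also have "e ((l + 1) mod (p - 1) + 1) = g * g ^ l"
  proof -
    have "e ((l + 1) mod (p - 1) + 1) = g ^ ((l + 1) mod (p - 1))" unfolding e_def by simp
    also have "\<dots> = g ^ (l + 1)" by (rule g_pow_mod)
    finally show ?thesis by simp
  qed
  also have "Mf (g * g ^ k) (g * g ^ l) = Mf (g ^ k) (g ^ l)" by (rule Mf_scale[OF g_nz])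
  also have "\<dots> = Mat $$ (k + 1, l + 1)" using a by (simp add: Mat_index e_def)
  finally show "Mat $$ (k + 2, (l + 1) mod (p - 1) + 1) = Mat $$ (k + 1, l + 1)" .
qed

end

theorem corollary2p21:
  fixes p :: nat
  assumes "prime p" and "card (UNIV :: 'a set) = p"
  shows "\<exists>(\<tau>::'a::{field,finite}) (M::'a mat). AONT_matrix 2 p M \<and> standard_form p M \<and>
           tau_skew_symmetric p \<tau> M \<and> cyclic_mat p M"
proof -
  obtain g0 where g0: "residue_primroot p g0"
    using prime_primitive_root_exists[of p] assms(1) prime_gt_1_nat by blast
  have ordg: "ord p g0 = p - 1" using g0 assms(1) by (simp add: residue_primroot_def totient_prime)
  have ch: "CHAR('a) = p" using char_gen assms by blast
  define g :: 'a where "g = of_nat g0"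
  have gpow: "g ^ k = 1 \<longleftrightarrow> (p - 1) dvd k" for k
  proof -
    have "g ^ k = of_nat (g0 ^ k)" by (simp add: g_def)
    then have "g ^ k = 1 \<longleftrightarrow> (of_nat (g0 ^ k) :: 'a) = of_nat 1" by simp
    also have "\<dots> \<longleftrightarrow> [g0 ^ k = 1] (mod p)" by (simp only: of_nat_eq_iff_cong_CHAR ch)
    also have "\<dots> \<longleftrightarrow> (p - 1) dvd k" by (simp add: ord_divides' ordg)
    finally show ?thesis .
  qed
  interpret P: pfield p g using assms gpow by unfold_locales auto
  show ?thesis using P.Mat_AONT P.Mat_std P.Mat_skew P.Mat_cyclic by blast
qed
end
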